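(* Let $D$ be a joint distribution of $(\mathbf{x},y)$ on $\mathbb{R}^d\times\{\pm1\}$ with $\mathbf{x}$-marginal $\mathcal{N}_d=\mathcal{N}(\mathbf{0},\mathbf{I}_d)$, and suppose $D$ satisfies the reliability condition with respect to $f(\mathbf{x})=\mathrm{sign}(\langle\mathbf{w}^*,\mathbf{x}\rangle-t^* )$, where $\mathbf{w}^*$ is a unit vector. Then there exists a polynomial $p:\mathbb{R}\to\mathbb{R}$ of degree at most $k=O({t^*}^2+1)$ such that $\mathbb{E}_{z\sim\mathcal{N}_1}[p(z)]=0$, $\mathbb{E}_{z\sim\mathcal{N}_1}[p^2(z)]=1$, and $\mathbb{E}_{(\mathbf{x},y)\sim D}[y\,p(\langle\mathbf{w}^*,\mathbf{x}\rangle)]=2^{-O({t^*}^2)}\Pr_{(\mathbf{x},y)\sim D}[y=-1]$.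
   Context: A distribution $D$ on $X\times\{\pm1\}$ satisfies the reliability condition with respect to $f:X\to\{\pm1\}$ if $\Pr_{(\mathbf{x},y)\sim D}[f(\mathbf{x})=+1\wedge y=-1]=0$. $\mathcal{N}_1$ is the standard one-dimensional Gaussian. *)

theory Defs
  imports "HOL-Probability.Probability" "HOL-Computational_Algebra.Polynomial"
begin

definition gauss1 :: "real measure" where
  "gauss1 = density lborel (\<lambda>x. ennreal (std_normal_density x))"

text \<open>d-dimensional standard Gaussian N_d = N(0, I_d), on vectors represented as
  functions nat => real supported on coordinates 0..d-1 (product measure).\<close>
definition gauss_vec :: "nat \<Rightarrow> (nat \<Rightarrow> real) measure" where
  "gauss_vec d = PiM {..<d} (\<lambda>_. gauss1)"

definition inner_d :: "nat \<Rightarrow> (nat \<Rightarrow> real) \<Rightarrow> (nat \<Rightarrow> real) \<Rightarrow> real" where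
  "inner_d d w x = (\<Sum>i<d. w i * x i)"

definition halfspace :: "nat \<Rightarrow> (nat \<Rightarrow> real) \<Rightarrow> real \<Rightarrow> (nat \<Rightarrow> real) \<Rightarrow> real" where
  "halfspace d w t x = (if inner_d d w x - t \<ge> 0 then 1 else -1)"

definition reliable :: "('a \<times> real) measure \<Rightarrow> ('a \<Rightarrow> real) \<Rightarrow> bool" where
  "reliable D f \<longleftrightarrow> measure D {z \<in> space D. f (fst z) = 1 \<and> snd z = -1} = 0"

end

theory Submission
  imports Defs
begin

lemma prob_gauss1: "prob_space gauss1"
  unfolding gauss1_def by (rule prob_space_normal_density) simp

lemma sets_gauss1[measurable_cong, simp]: "sets gauss1 = sets borel"
  unfolding gauss1_def by simp

lemma space_gauss1[simp]: "space gauss1 = UNIV"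
  unfolding gauss1_def by simp

lemma prob_gauss_vec: "prob_space (gauss_vec d)"
  unfolding gauss_vec_def by (rule prob_space_PiM) (rule prob_gauss1)

lemma inner_distr:
  assumes w: "(\<Sum>i<d. (w i)\<^sup>2) = 1"
  shows "distributed (gauss_vec d) lborel (inner_d d w) std_normal_density"
proof -
  interpret P: prob_space "gauss_vec d" by (rule prob_gauss_vec)
  define I where "I = {i. i < d \<and> w i \<noteq> 0}"
  have finI: "finite I" unfolding I_def by simp
  have sumI: "(\<Sum>i\<in>I. (w i)\<^sup>2) = 1"
  proof -
    have "(\<Sum>i<d. (w i)\<^sup>2) = (\<Sum>i\<in>I. (w i)\<^sup>2)"
      unfolding I_def by (rule sum.mono_neutral_right) auto
    then show ?thesis using w by simp
  qed
  have Ine: "I \<noteq> {}" using sumI by auto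
  have rv: "\<And>i. i \<in> {..<d} \<Longrightarrow> (\<lambda>x. x i) \<in> measurable (gauss_vec d) gauss1"
    unfolding gauss_vec_def by measurable
  have distc: "\<And>i. i \<in> {..<d} \<Longrightarrow> distr (gauss_vec d) gauss1 (\<lambda>x. x i) = gauss1"
    unfolding gauss_vec_def by (rule distr_PiM_component) (auto intro: prob_gauss1)
  have ind0: "P.indep_vars (\<lambda>_. gauss1) (\<lambda>i x. x i) {..<d}"
  proof (subst P.indep_vars_iff_distr_eq_PiM'[OF _ rv])
    show "{..<d} \<noteq> {}" using Ine I_def by auto
    have "distr (gauss_vec d) (Pi\<^sub>M {..<d} (\<lambda>i. gauss1)) (\<lambda>x. \<lambda>i\<in>{..<d}. x i)
        = distr (gauss_vec d) (gauss_vec d) (\<lambda>x. x)"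
      unfolding gauss_vec_def
      by (rule distr_cong) (auto simp: space_PiM PiE_def extensional_restrict)
    also have "\<dots> = gauss_vec d" by simp
    also have "\<dots> = (Pi\<^sub>M {..<d} (\<lambda>i. distr (gauss_vec d) gauss1 (\<lambda>x. x i)))"
      unfolding gauss_vec_def 
      by (intro PiM_cong) (auto simp: distc[unfolded gauss_vec_def])
    finally show "distr (gauss_vec d) (Pi\<^sub>M {..<d} (\<lambda>i. gauss1)) (\<lambda>x. \<lambda>i\<in>{..<d}. x i) =
      (Pi\<^sub>M {..<d} (\<lambda>i. distr (gauss_vec d) gauss1 (\<lambda>x. x i)))" .
  qed auto
  have ind: "P.indep_vars (\<lambda>_. borel) (\<lambda>i x. w i * x i) I"
    by (rule P.indep_vars_compose2[OF P.indep_vars_subset[OF ind0]]) (auto simp: I_def)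
  have dst: "distributed (gauss_vec d) lborel (\<lambda>x. w i * x i) (normal_density 0 \<bar>w i\<bar>)"
    if i: "i \<in> I" for i
  proof -
    have "distributed (gauss_vec d) lborel (\<lambda>x. x i) std_normal_density"
      unfolding distributed_def
    proof (intro conjI)
      have "distr (gauss_vec d) lborel (\<lambda>x. x i) = distr (gauss_vec d) gauss1 (\<lambda>x. x i)"
        by (rule distr_cong) auto
      also have "\<dots> = gauss1" using i distc I_def by auto
      finally show "distr (gauss_vec d) lborel (\<lambda>x. x i) = density lborel std_normal_density"
        unfolding gauss1_def .
      show "(\<lambda>x. x i) \<in> measurable (gauss_vec d) lborel"
        proof -
        have "measurable (gauss_vec d) lborel = measurable (gauss_vec d) gauss1"
          by (rule measurable_cong_sets) auto
        then show ?thesis using rv[of i] i I_def by simp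
      qed
    qed simp
    from P.normal_density_affine[OF this, of "w i" 0] i show ?thesis
      by (simp add: I_def)
  qed
  have "distributed (gauss_vec d) lborel (\<lambda>x. \<Sum>i\<in>I. w i * x i)
     (normal_density (\<Sum>i\<in>I. 0) (sqrt (\<Sum>i\<in>I. (\<bar>w i\<bar>)\<^sup>2)))"
    by (rule P.sum_indep_normal[OF finI Ine ind]) (auto simp: I_def intro: dst)
  moreover have "(\<lambda>x. \<Sum>i\<in>I. w i * x i) = inner_d d w"
    unfolding inner_d_def I_def by (intro ext sum.mono_neutral_left) auto
  ultimately show ?thesis using sumI by simp
qed

definition ev :: "nat \<Rightarrow> real" where "ev k = fact (2*k) / (2^k * fact k)"

lemma ev_0[simp]: "ev 0 = 1" by (simp add: ev_def)

lemma ev_Suc: "ev (Suc k) = (2*real k+1) * ev k"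
proof -
  define F where "F = (fact (2*k) :: real)"
  define G where "G = (2^k * fact k :: real)"
  have G: "G > 0" unfolding G_def by simp
  have "fact (2 * Suc k) = 2*(real k+1)*((2*real k+1) * F)"
    unfolding F_def by (simp add: algebra_simps)
  moreover have "(2::real)^Suc k * fact (Suc k) = 2 * (real k + 1) * G"
    unfolding G_def by (simp add: algebra_simps)
  ultimately have "ev (Suc k) = (2*(real k+1)*((2*real k+1) * F)) / (2 * (real k + 1) * G)"
    unfolding ev_def by simp
  also have "\<dots> = ((2*real k+1) * F) / G"
    by (rule mult_divide_mult_cancel_left) simp
  also have "\<dots> = (2*real k+1) * ev k" unfolding ev_def F_def G_def by simp
  finally show ?thesis .
qed

lemma ev_pos: "0 < ev k" by (simp add: ev_def)

lemma ev_ge_fact: "fact k \<le> ev k"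
proof (induction k)
  case (Suc k)
  have "fact (Suc k) = (real k + 1) * fact k" by simp
  also have "\<dots> \<le> (2*real k+1) * ev k" using Suc by (intro mult_mono) auto
  finally show ?case by (simp add: ev_Suc)
qed simp

lemma ev_double: "ev m ^ 2 \<le> ev (2*m) \<and> ev (2*m) \<le> 4^m * ev m ^ 2"
proof (induction m)
  case (Suc m)
  define A where "A = (4*real m+3)*(4*real m+1)"
  define B where "B = (2*real m+1)^2"
  have e1: "ev (2 * Suc m) = A * ev (2*m)"
  proof -
    have "2 * Suc m = Suc (Suc (2*m))" by simp
    then show ?thesis unfolding A_def by (simp only: ev_Suc) (simp add: algebra_simps)
  qed
  have e2: "ev (Suc m)^2 = B * ev m ^ 2"
    unfolding B_def by (simp add: ev_Suc power_mult_distrib)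
  have a: "B \<le> A" unfolding A_def B_def by (simp add: power2_eq_square algebra_simps)
  have b: "A \<le> 4*B" unfolding A_def B_def by (simp add: power2_eq_square algebra_simps)
  have B0: "0 \<le> B" unfolding B_def by simp
  have "B * ev m ^ 2 \<le> A * ev (2*m)"
    using Suc a B0 by (intro mult_mono) auto
  moreover have "A * ev (2*m) \<le> (4*B) * (4^m * ev m ^ 2)"
    using Suc b ev_pos[of "2*m"] B0 by (intro mult_mono) auto
  ultimately show ?case using e1 e2 by (simp add: algebra_simps)
qed simp

lemma fact_lower: "(real m / 3) ^ m \<le> fact m"
proof (induction m)
  case (Suc m)
  have key: "(real m + 1) ^ m \<le> 3 * real m ^ m"
  proof (cases "m = 0")
    case False
    have 1: "(real m + 1) ^ m = real m ^ m * (1 + 1/m) ^ m"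
      using False by (simp add: power_mult_distrib[symmetric] field_simps)
    have 2: "(1 + 1/real m) ^ m \<le> exp (1/m) ^ m"
      by (intro power_mono) (auto simp del: exp_ge_add_one_self intro: exp_ge_add_one_self[of "1/m"])
    have 3: "exp (1/real m) ^ m = exp 1"
      using False by (simp add: exp_of_nat_mult[symmetric])
    have "(1 + 1/real m) ^ m \<le> 3" using 2 3 exp_le by simp
    then have "real m ^ m * (1 + 1/m) ^ m \<le> real m ^ m * 3" by (intro mult_left_mono) auto
    then show ?thesis using 1 by simp
  qed simp
  have "(real (Suc m) / 3) ^ Suc m = (real m + 1)/3 * ((real m + 1) ^ m / 3 ^ m)"
    by (simp add: power_divide add.commute)
  also have "\<dots> \<le> (real m + 1)/3 * (3 * real m ^ m / 3^m)"
    using key by (intro mult_left_mono divide_right_mono) auto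
  also have "\<dots> = (real m + 1) * (real m / 3) ^ m" by (simp add: power_divide)
  also have "\<dots> \<le> (real m + 1) * fact m" using Suc by (intro mult_left_mono) auto
  also have "\<dots> = fact (Suc m)" by (simp add: algebra_simps)
  finally show ?case .
qed simp

lemma six_le_8pow: "6 * real m \<le> 8 ^ m"
proof (induction m)
  case (Suc m)
  show ?case
  proof (cases "m = 0")
    case True then show ?thesis by simp
  next
    case False
    have "1 \<le> (8::real)^m" by simp
    then have "6 \<le> 7 * (8::real)^m" by linarith
    then show ?thesis using Suc by simp
  qed
qed simp


lemma mom: "has_bochner_integral gauss1 (\<lambda>x. x^k) (if even k then ev (k div 2) else 0)"
proof -
  have "has_bochner_integral lborel (\<lambda>x. std_normal_density x *\<^sub>R x^k) (if even k then ev (k div 2) else 0)"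
  proof (cases "even k")
    case True
    then obtain j where k: "k = 2*j" by blast
    show ?thesis using std_normal_moment_even[of j] by (simp add: k ev_def)
  next
    case False
    then obtain j where k: "k = 2*j+1" using oddE by blast
    show ?thesis using std_normal_moment_odd[of j] by (simp add: k)
  qed
  then show ?thesis unfolding gauss1_def
    by (intro has_bochner_integral_density) auto
qed

lemma mom_int: "integrable gauss1 (\<lambda>x. x^k)"
  using mom has_bochner_integral_iff by blast

lemma poly_int: "integrable gauss1 (\<lambda>x. poly p x)"
proof -
  have "\<And>i. integrable gauss1 (\<lambda>x. coeff p i * x^i)" using mom_int by simp
  then have "integrable gauss1 (\<lambda>x. \<Sum>i\<le>degree p. coeff p i * x^i)" by simp
  then show ?thesis by (simp add: poly_altdef)
qed

lemma poly_sq_int: "integrable gauss1 (\<lambda>x. (poly p x)^2)"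
  using poly_int[of "p*p"] by (simp add: power2_eq_square)

lemma poly_exists:
  fixes t :: real
  shows "\<exists>p::real poly. real (degree p) \<le> 36*(t\<^sup>2+1) \<and>
     has_bochner_integral gauss1 (\<lambda>z. poly p z) 0 \<and>
     has_bochner_integral gauss1 (\<lambda>z. (poly p z)^2) 1 \<and>
     (\<forall>z. z < t \<longrightarrow> poly p z \<le> - (2 powr (-36*(t\<^sup>2+1))) / 2)"
proof -
  define u where "u = t\<^sup>2 + 1"
  define T where "T = max t 1"
  have T1: "1 \<le> T" and Tt: "t \<le> T" unfolding T_def by auto
  have Tu: "T\<^sup>2 \<le> u" unfolding T_def u_def by (cases "t \<le> 1") (auto simp: max_def)
  have u1: "1 \<le> u" unfolding u_def by simp
  define m where "m = nat \<lceil>6*T\<^sup>2\<rceil>"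
  have T2: "1 \<le> T\<^sup>2" using T1 by (simp add: one_le_power)
  have mr: "real m = of_int \<lceil>6*T\<^sup>2\<rceil>" unfolding m_def using T2
    by (intro of_nat_nat) (smt (verit) ceiling_le_zero)
  have m_ge: "6*T\<^sup>2 \<le> real m" unfolding mr by (rule le_of_int_ceiling)
  have m_le: "real m \<le> 6*T\<^sup>2 + 1" unfolding mr by (rule of_int_ceiling_le_add_one)
  have m6: "6 \<le> real m" using m_ge T2 by linarith
  define \<mu> where "\<mu> = ev m"
  have \<mu>pos: "0 < \<mu>" unfolding \<mu>_def by (rule ev_pos)
  have \<mu>big: "4 * T^(2*m) \<le> \<mu>"
  proof -
    have "(2*T\<^sup>2)^m \<le> (real m/3)^m" using m_ge T2 by (intro power_mono) auto
    also have "\<dots> \<le> fact m" by (rule fact_lower)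
    also have "\<dots> \<le> \<mu>" unfolding \<mu>_def by (rule ev_ge_fact)
    finally have a: "(2*T\<^sup>2)^m \<le> \<mu>" .
    have "(4::real) = 2^2" by simp
    also have "\<dots> \<le> 2^m" using m6 by (intro power_increasing) auto
    finally have b: "4 \<le> (2::real)^m" .
    have "4 * T^(2*m) \<le> 2^m * T^(2*m)" using b by (intro mult_right_mono) auto
    also have "\<dots> = (2*T\<^sup>2)^m" by (simp add: power_mult_distrib power_mult)
    finally show ?thesis using a by linarith
  qed
  define S where "S = ev (2*m+1) + T\<^sup>2 * ev (2*m) - T\<^sup>2 * \<mu>\<^sup>2"
  have e21: "ev (2*m+1) = (4*real m+1) * ev (2*m)"
    using ev_Suc[of "2*m"] by simp
  have dbl: "\<mu>\<^sup>2 \<le> ev (2*m)" "ev (2*m) \<le> 4^m * \<mu>\<^sup>2" using ev_double[of m] unfolding \<mu>_def by auto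
  have Spos: "0 < S"
  proof -
    have "0 < ev (2*m+1)" by (rule ev_pos)
    moreover have "0 \<le> T\<^sup>2 * (ev (2*m) - \<mu>\<^sup>2)" using dbl by simp
    ultimately show ?thesis unfolding S_def by (simp add: algebra_simps)
  qed
  have Sle: "S \<le> 32^m * \<mu>\<^sup>2"
  proof -
    have "S \<le> (4*real m+1+T\<^sup>2) * ev (2*m)" unfolding S_def e21 by (simp add: algebra_simps)
    also have "\<dots> \<le> 8^m * (4^m * \<mu>\<^sup>2)"
    proof (intro mult_mono)
      have "4*real m+1+T\<^sup>2 \<le> 6 * real m" using m_ge m6 T2 by linarith
      also have "\<dots> \<le> 8^m" by (rule six_le_8pow)
      finally show "4*real m+1+T\<^sup>2 \<le> 8^m" .
    qed (use dbl ev_pos[of "2*m"] in auto)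
    also have "\<dots> = 32^m * \<mu>\<^sup>2" by (simp add: power_mult_distrib[symmetric])
    finally show ?thesis .
  qed
  have ratio: "2 powr (-36*u) \<le> \<mu> / sqrt S"
  proof -
    have "sqrt S \<le> sqrt (32^m * \<mu>\<^sup>2)" using Sle by simp
    also have "\<dots> = sqrt (32^m) * \<mu>" using \<mu>pos by (simp add: real_sqrt_mult)
    also have "\<dots> \<le> 32^m * \<mu>"
    proof -
      define X where "X = (32::real)^m"
      have X1: "1 \<le> X" unfolding X_def by simp
      have "sqrt X \<le> sqrt (X*X)" using X1 by (intro real_sqrt_le_mono) (simp add: mult_le_cancel_left1)
      also have "\<dots> = X" using X1 by simp
      finally show ?thesis using \<mu>pos unfolding X_def by (intro mult_right_mono) auto
    qed
    finally have a: "sqrt S \<le> 32^m * \<mu>" .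
    have "(32::real)^m = 2 powr (5*real m)"
      by (simp add: powr_realpow[symmetric] powr_powr[symmetric] power_mult)
    also have "\<dots> \<le> 2 powr (36*u)" using m_le Tu u1 by (intro powr_mono) auto
    finally have b: "(32::real)^m \<le> 2 powr (36*u)" .
    have "2 powr (-36*u) = 1 / 2 powr (36*u)" by (simp add: powr_minus divide_inverse)
    also have "\<dots> \<le> 1 / 32^m" using b by (intro divide_left_mono) auto
    also have "\<dots> = \<mu> / (32^m * \<mu>)" using \<mu>pos by simp
    also have "\<dots> \<le> \<mu> / sqrt S" using a Spos \<mu>pos by (intro divide_left_mono) auto
    finally show ?thesis .
  qed
  define q where "q = monom 1 (2*m+1) + monom T (2*m) - [:T*\<mu>:]"
  have polyq: "poly q z = z^(2*m+1) + T*z^(2*m) - T*\<mu>" for z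
    unfolding q_def by (simp add: poly_monom)
  have degq: "degree q \<le> 2*m+1"
    unfolding q_def by (intro degree_diff_le degree_add_le) (auto simp: degree_monom_le intro: order_trans[OF degree_monom_le])
  have qneg: "poly q z \<le> - \<mu>/2" if "z < t" for z
  proof -
    have zT: "z < T" using that Tt by simp
    have fac: "z^(2*m+1) + T*z^(2*m) = z^(2*m) * (z+T)" by (simp add: algebra_simps)
    show ?thesis
    proof (cases "z \<le> -T")
      case True
      have "z^(2*m) * (z+T) \<le> 0" using True by (intro mult_nonneg_nonpos) (auto simp: zero_le_even_power)
      moreover have "\<mu> \<le> T*\<mu>" using T1 \<mu>pos by (simp add: mult_le_cancel_right1)
      ultimately show ?thesis unfolding polyq using fac \<mu>pos by linarith
    next
      case False
      have az: "\<bar>z\<bar> \<le> T" using False zT by auto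
      have "z^(2*m) = \<bar>z\<bar>^(2*m)" by (simp add: power_even_abs)
      also have "\<dots> \<le> T^(2*m)" using az by (intro power_mono) auto
      finally have zp: "z^(2*m) \<le> T^(2*m)" .
      have "z^(2*m) * (z+T) \<le> T^(2*m) * (2*T)"
        using zp zT False by (intro mult_mono) (auto simp: zero_le_even_power)
      also have "\<dots> \<le> (\<mu>/4) * (2*T)" using \<mu>big T1 by (intro mult_right_mono) auto
      finally have "z^(2*m) * (z+T) \<le> T*\<mu>/2" by simp
      moreover have "\<mu> \<le> T*\<mu>" using T1 \<mu>pos by (simp add: mult_le_cancel_right1)
      ultimately show ?thesis unfolding polyq using fac \<mu>pos by linarith
    qed
  qed
  have Eq: "has_bochner_integral gauss1 (\<lambda>z. poly q z) 0"
  proof -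
    have "has_bochner_integral gauss1 (\<lambda>z. z^(2*m+1) + T*z^(2*m) - (T*\<mu>)*z^0) (0 + T*\<mu> - (T*\<mu>)*1)"
      using mom[of "2*m+1"] mom[of "2*m"] mom[of 0]
      by (intro has_bochner_integral_add has_bochner_integral_diff has_bochner_integral_mult_right)
         (auto simp: \<mu>_def)
    then show ?thesis by (simp add: polyq)
  qed
  have Eq2: "has_bochner_integral gauss1 (\<lambda>z. (poly q z)^2) S"
  proof -
    have m1: "has_bochner_integral gauss1 (\<lambda>x. x^(4*m+2)) (ev (2*m+1))"
      using mom[of "4*m+2"] by simp
    have m2: "has_bochner_integral gauss1 (\<lambda>x. x^(4*m+1)) 0"
      using mom[of "4*m+1"] by simp
    have m3: "has_bochner_integral gauss1 (\<lambda>x. x^(4*m)) (ev (2*m))"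
      using mom[of "4*m"] by simp
    have m4: "has_bochner_integral gauss1 (\<lambda>x. x^(2*m+1)) 0"
      using mom[of "2*m+1"] by simp
    have m5: "has_bochner_integral gauss1 (\<lambda>x. x^(2*m)) \<mu>"
      using mom[of "2*m"] by (simp add: \<mu>_def)
    have m6: "has_bochner_integral gauss1 (\<lambda>x. x^0) 1"
      using mom[of 0] by simp
    have "has_bochner_integral gauss1 (\<lambda>z. z^(4*m+2) + (2*T)*z^(4*m+1) + T\<^sup>2*z^(4*m)
          - (2*T*\<mu>)*z^(2*m+1) - (2*T\<^sup>2*\<mu>)*z^(2*m) + (T\<^sup>2*\<mu>\<^sup>2)*z^0)
          (ev (2*m+1) + (2*T)*0 + T\<^sup>2*ev (2*m) - (2*T*\<mu>)*0 - (2*T\<^sup>2*\<mu>)*\<mu> + (T\<^sup>2*\<mu>\<^sup>2)*1)"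
      by (intro has_bochner_integral_add has_bochner_integral_diff has_bochner_integral_mult_right m1 m2 m3 m4 m5 m6)
    moreover have "(z^(2*m+1) + T*z^(2*m) - T*\<mu>)^2 = z^(4*m+2) + (2*T)*z^(4*m+1) + T\<^sup>2*z^(4*m)
          - (2*T*\<mu>)*z^(2*m+1) - (2*T\<^sup>2*\<mu>)*z^(2*m) + (T\<^sup>2*\<mu>\<^sup>2)*z^0" for z
    proof -
      have "z^(4*m+2) = z^(2*m+1) * z^(2*m+1)" by (simp add: power_add[symmetric])
      moreover have "z^(4*m+1) = z^(2*m+1) * z^(2*m)" by (simp add: power_add[symmetric])
      moreover have "z^(4*m) = z^(2*m) * z^(2*m)" by (simp add: power_add[symmetric])
      ultimately show ?thesis by (simp add: power2_eq_square algebra_simps)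
    qed
    ultimately show ?thesis unfolding polyq S_def by (simp add: power2_eq_square algebra_simps)
  qed
  define p where "p = smult (1 / sqrt S) q"
  have polyp: "poly p z = (1 / sqrt S) * poly q z" for z unfolding p_def by simp
  show ?thesis
  proof (intro exI[of _ p] conjI allI impI)
    have "real (degree p) \<le> real (2*m+1)" unfolding p_def using degq by simp
    also have "\<dots> \<le> 36*(t\<^sup>2+1)" proof -
      have "real (2*m+1) = 2*real m + 1" by simp
      moreover have "2*real m + 1 \<le> 12*T\<^sup>2 + 3" using m_le by linarith
      moreover have "12*T\<^sup>2 + 3 \<le> 36*t\<^sup>2+36" using Tu zero_le_power2[of t] unfolding u_def by linarith
      ultimately show ?thesis unfolding distrib_left by linarith
    qed
    finally show "real (degree p) \<le> 36*(t\<^sup>2+1)" .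
    show "has_bochner_integral gauss1 (\<lambda>z. poly p z) 0"
      unfolding polyp using has_bochner_integral_mult_right[OF Eq, of "1/sqrt S"] by simp
    have "has_bochner_integral gauss1 (\<lambda>z. (1/S) * (poly q z)^2) ((1/S) * S)"
      by (intro has_bochner_integral_mult_right Eq2)
    then show "has_bochner_integral gauss1 (\<lambda>z. (poly p z)^2) 1"
      unfolding polyp using Spos by (simp add: power_mult_distrib power_divide)
    fix z assume "z < t"
    have "poly p z \<le> (1 / sqrt S) * (-\<mu>/2)"
      unfolding polyp using qneg[OF \<open>z < t\<close>] Spos by (intro mult_left_mono) auto
    also have "\<dots> = - (\<mu> / sqrt S) / 2" by simp
    also have "\<dots> \<le> - (2 powr (-36*(t\<^sup>2+1))) / 2" using ratio unfolding u_def by simp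
    finally show "poly p z \<le> - (2 powr (-36*(t\<^sup>2+1))) / 2" .
  qed
qed


lemma transfer:
  fixes g :: "real \<Rightarrow> real"
  assumes sD: "sets D = sets (gauss_vec d \<Otimes>\<^sub>M borel)"
    and dD: "distr D (gauss_vec d) fst = gauss_vec d"
    and w: "(\<Sum>i<d. (w i)\<^sup>2) = 1"
    and g: "g \<in> borel_measurable borel"
  shows "integrable D (\<lambda>z. g (inner_d d w (fst z))) = integrable gauss1 g"
    and "(\<integral>z. g (inner_d d w (fst z)) \<partial>D) = (\<integral>x. g x \<partial>gauss1)"
proof -
  have dist: "distributed (gauss_vec d) lborel (inner_d d w) std_normal_density"
    by (rule inner_distr[OF w])
  then have mi: "inner_d d w \<in> measurable (gauss_vec d) lborel"
    and di: "distr (gauss_vec d) lborel (inner_d d w) = gauss1"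
    unfolding distributed_def gauss1_def by auto
  have mf: "fst \<in> measurable D (gauss_vec d)"
    by (subst measurable_cong_sets[OF sD refl]) (rule measurable_fst)
  have gl: "g \<in> borel_measurable lborel" using g by simp
  have "integrable D (\<lambda>z. g (inner_d d w (fst z))) = integrable (distr D (gauss_vec d) fst) (\<lambda>x. g (inner_d d w x))"
    by (rule integrable_distr_eq[where g=fst and M=D and N="gauss_vec d" and f="\<lambda>x. g (inner_d d w x)", symmetric, OF mf]) (use gl mi in measurable)
  also have "\<dots> = integrable (gauss_vec d) (\<lambda>x. g (inner_d d w x))" using dD by simp
  also have "\<dots> = integrable (distr (gauss_vec d) lborel (inner_d d w)) g"
    by (rule integrable_distr_eq[symmetric, OF mi gl])
  also have "\<dots> = integrable gauss1 g" using di by simp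
  finally show "integrable D (\<lambda>z. g (inner_d d w (fst z))) = integrable gauss1 g" .
  have "(\<integral>z. g (inner_d d w (fst z)) \<partial>D) = (\<integral>x. g (inner_d d w x) \<partial>(distr D (gauss_vec d) fst))"
    by (rule integral_distr[where g=fst and M=D and N="gauss_vec d" and f="\<lambda>x. g (inner_d d w x)", symmetric, OF mf]) (use gl mi in measurable)
  also have "\<dots> = (\<integral>x. g (inner_d d w x) \<partial>gauss_vec d)" using dD by simp
  also have "\<dots> = (\<integral>x. g x \<partial>(distr (gauss_vec d) lborel (inner_d d w)))"
    by (rule integral_distr[symmetric, OF mi gl])
  also have "\<dots> = (\<integral>x. g x \<partial>gauss1)" using di by simp
  finally show "(\<integral>z. g (inner_d d w (fst z)) \<partial>D) = (\<integral>x. g x \<partial>gauss1)" .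
qed

lemma poly_borel: "(\<lambda>x. poly p x :: real) \<in> borel_measurable borel"
  by (intro borel_measurable_continuous_onI continuous_intros)

theorem lemma2p2:
  shows "\<exists>C>0. \<forall>(d::nat) (D::((nat \<Rightarrow> real) \<times> real) measure) (w::nat \<Rightarrow> real) (t::real).
     prob_space D \<and>
     sets D = sets (gauss_vec d \<Otimes>\<^sub>M borel) \<and>
     distr D (gauss_vec d) fst = gauss_vec d \<and>
     (AE z in D. snd z \<in> {-1, 1}) \<and>
     (\<Sum>i<d. (w i)\<^sup>2) = 1 \<and>
     reliable D (halfspace d w t)
     \<longrightarrow> (\<exists>p::real poly.
            real (degree p) \<le> C * (t\<^sup>2 + 1) \<and>
            (\<integral>z. poly p z \<partial>gauss1) = 0 \<and>
            (\<integral>z. (poly p z)\<^sup>2 \<partial>gauss1) = 1 \<and>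
            (\<integral>z. snd z * poly p (inner_d d w (fst z)) \<partial>D)
              \<ge> 2 powr (- C * (t\<^sup>2 + 1)) * measure D {z \<in> space D. snd z = -1})"
proof (intro exI[of _ "36::real"] conjI allI impI)
  show "0 < (36::real)" by simp
next
  fix d D w t
  assume H: "prob_space D \<and>
     sets D = sets (gauss_vec d \<Otimes>\<^sub>M borel) \<and>
     distr D (gauss_vec d) fst = gauss_vec d \<and>
     (AE z in D. snd z \<in> {-1, 1}) \<and>
     (\<Sum>i<d. (w i)\<^sup>2) = 1 \<and>
     reliable D (halfspace d w t)"
  then have PD: "prob_space D" and sD: "sets D = sets (gauss_vec d \<Otimes>\<^sub>M borel)"
    and dD: "distr D (gauss_vec d) fst = gauss_vec d" and ys: "AE z in D. snd z \<in> {-1, 1}"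
    and w: "(\<Sum>i<d. (w i)\<^sup>2) = 1" and rel: "reliable D (halfspace d w t)" by auto
  interpret P: prob_space D by (rule PD)
  obtain p :: "real poly" where deg: "real (degree p) \<le> 36*(t\<^sup>2+1)"
    and E0: "has_bochner_integral gauss1 (\<lambda>z. poly p z) 0"
    and E1: "has_bochner_integral gauss1 (\<lambda>z. (poly p z)^2) 1"
    and neg: "\<And>z. z < t \<Longrightarrow> poly p z \<le> - (2 powr (-36*(t\<^sup>2+1))) / 2"
    using poly_exists[of t] by blast
  define c where "c = 2 powr (-36*(t\<^sup>2+1))"
  define Z where "Z = (\<lambda>z::(nat \<Rightarrow> real) \<times> real. inner_d d w (fst z))"
  define A where "A = {z \<in> space D. snd z = -1}"
  have mfst: "fst \<in> measurable D (gauss_vec d)"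
    by (subst measurable_cong_sets[OF sD refl]) (rule measurable_fst)
  have msnd: "snd \<in> borel_measurable D"
    by (subst measurable_cong_sets[OF sD refl]) (rule measurable_snd)
  have minner: "inner_d d w \<in> borel_measurable (gauss_vec d)"
  proof -
    have "measurable (gauss_vec d) lborel = measurable (gauss_vec d) borel"
      by (rule measurable_cong_sets) auto
    then show ?thesis using inner_distr[OF w] unfolding distributed_def by simp
  qed
  have mZ: "Z \<in> borel_measurable D" unfolding Z_def using minner mfst by measurable
  have Asets: "A \<in> sets D" unfolding A_def using msnd by measurable
  have intp: "integrable D (\<lambda>z. poly p (Z z))"
    unfolding Z_def using transfer(1)[OF sD dD w poly_borel] poly_int by simp
  have intp0: "(\<integral>z. poly p (Z z) \<partial>D) = 0"
    unfolding Z_def using transfer(2)[OF sD dD w poly_borel] E0 has_bochner_integral_integral_eq by simp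
  have Hset: "{z \<in> space D. halfspace d w t (fst z) = 1 \<and> snd z = -1} \<in> sets D"
  proof -
    have "{z \<in> space D. halfspace d w t (fst z) = 1 \<and> snd z = -1} = {z \<in> space D. 0 \<le> Z z - t \<and> snd z = -1}"
      unfolding halfspace_def Z_def by auto
    also have "\<dots> \<in> sets D" using mZ msnd by measurable
    finally show ?thesis .
  qed
  have AEr: "AE z in D. \<not> (halfspace d w t (fst z) = 1 \<and> snd z = -1)"
  proof (subst AE_iff_measurable[OF Hset])
    show "{z \<in> space D. \<not> \<not> (halfspace d w t (fst z) = 1 \<and> snd z = -1)} = {z \<in> space D. halfspace d w t (fst z) = 1 \<and> snd z = -1}"
      by simp
    show "emeasure D {z \<in> space D. halfspace d w t (fst z) = 1 \<and> snd z = -1} = 0"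
      using rel unfolding reliable_def by (simp add: P.emeasure_eq_measure)
  qed
  have AEmain: "AE z in D. poly p (Z z) + c * indicator A z \<le> snd z * poly p (Z z)"
    using AEr ys AE_space
  proof (eventually_elim)
    case (elim z)
    show ?case
    proof (cases "snd z = -1")
      case True
      then have "Z z < t" using elim(1) unfolding halfspace_def Z_def by (auto split: if_splits)
      then have "poly p (Z z) \<le> - c / 2" using neg unfolding c_def by simp
      moreover have "z \<in> A" using True elim(3) by (simp add: A_def)
      ultimately show ?thesis using True by (simp add: indicator_def)
    next
      case False
      then have "snd z = 1" using elim(2) by auto
      then show ?thesis using False by (simp add: A_def indicator_def)
    qed
  qed
  have intA: "integrable D (indicator A :: _ \<Rightarrow> real)"
    using Asets by (intro integrable_real_indicator) (auto simp: P.emeasure_eq_measure)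
  have intL: "integrable D (\<lambda>z. poly p (Z z) + c * indicator A z)"
    using intp intA by simp
  have intR: "integrable D (\<lambda>z. snd z * poly p (Z z))"
  proof (rule Bochner_Integration.integrable_bound[OF intp])
    have mpZ: "(\<lambda>z. poly p (Z z)) \<in> borel_measurable D"
      using measurable_compose[OF mZ poly_borel] by simp
    show "(\<lambda>z. snd z * poly p (Z z)) \<in> borel_measurable D"
      by (rule borel_measurable_times[OF msnd mpZ])
    show "AE z in D. norm (snd z * poly p (Z z)) \<le> norm (poly p (Z z))"
      using ys by eventually_elim (auto simp: abs_mult)
  qed
  have "(\<integral>z. poly p (Z z) + c * indicator A z \<partial>D) = c * measure D A"
    using intp intA intp0 Asets by (simp add: A_def)
  moreover have "(\<integral>z. poly p (Z z) + c * indicator A z \<partial>D) \<le> (\<integral>z. snd z * poly p (Z z) \<partial>D)"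
    by (rule integral_mono_AE[OF intL intR AEmain])
  ultimately have fin: "c * measure D A \<le> (\<integral>z. snd z * poly p (Z z) \<partial>D)" by simp
  have r1: "(\<integral>z. poly p z \<partial>gauss1) = 0" using E0 by (rule has_bochner_integral_integral_eq)
  have r2: "(\<integral>z. (poly p z)\<^sup>2 \<partial>gauss1) = 1" using E1 by (rule has_bochner_integral_integral_eq)
  have r3: "(\<integral>z. snd z * poly p (inner_d d w (fst z)) \<partial>D)
              \<ge> 2 powr (- 36 * (t\<^sup>2 + 1)) * measure D {z \<in> space D. snd z = -1}"
    using fin unfolding c_def Z_def A_def by simp
  show "\<exists>p::real poly.
            real (degree p) \<le> 36 * (t\<^sup>2 + 1) \<and>
            (\<integral>z. poly p z \<partial>gauss1) = 0 \<and>
            (\<integral>z. (poly p z)\<^sup>2 \<partial>gauss1) = 1 \<and>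
            (\<integral>z. snd z * poly p (inner_d d w (fst z)) \<partial>D)
              \<ge> 2 powr (- 36 * (t\<^sup>2 + 1)) * measure D {z \<in> space D. snd z = -1}"
    using deg r1 r2 r3 by blast
qed

end
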